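(* Let $X$ be a separable Hilbert space over $K$ (with norm induced by the inner product) with orthonormal basis $\{e_j\}_{j=1,2,\ldots}\cup\{e_i^*\}_{i=1,2,\ldots}$, and let $Z$ be the proper closed subspace with orthonormal basis $\{e_j\}$. Let $F:Z\to\mathbb{R}$ be a continuous functional with $F(0)=0$, and suppose there are positive constants $M_1,M_2$ such that for all orthogonal vectors $z_1,z_2$ lying in the union of the one-dimensional subspaces spanned by the individual $e_j$, $F^+(z_1)+F^+(z_2)\le M_1\|z_1+z_2\|_X$ and $F^-(z_1)+F^-(z_2)\le M_2\|z_1+z_2\|_X$. Then there exists a continuous $\hat F:X\to\mathbb{R}$ with $\hat F(z)=F(z)$ for $z\in Z$ and $|\hat F(x_1)+\hat F(x_2)|\le(M_1+M_2)\|x_1+x_2\|_X$ for all orthogonal vectors $x_1,x_2$ lying in the union of the one-dimensional subspaces spanned by the individual $e_j$ or $e_i^*$.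
   Context: $K$ is $\mathbb{R}$ or $\mathbb{C}$. $F^+(z)=\max[F(z),0]$ and $F^-(z)=\max[-F(z),0]$. *)

theory Defs
  imports "HOL-Analysis.Analysis"
begin

text \<open>Scalar field K: the flag cplx selects K = complex (True) or K = real (False).
A complex Hilbert space is encoded as a real Hilbert space (real part of the complex
inner product) together with a complex structure J (multiplication by i).\<close>

definition complex_structure :: "('a::real_inner \<Rightarrow> 'a) \<Rightarrow> bool" where
  "complex_structure J \<longleftrightarrow> linear J \<and> (\<forall>x. J (J x) = - x) \<and> (\<forall>x y. inner (J x) (J y) = inner x y)"

definition kscale :: "bool \<Rightarrow> ('a::real_inner \<Rightarrow> 'a) \<Rightarrow> complex \<Rightarrow> 'a \<Rightarrow> 'a" where
  "kscale cplx J c x = (if cplx then Re c *\<^sub>R x + Im c *\<^sub>R J x else Re c *\<^sub>R x)"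

definition kscalars :: "bool \<Rightarrow> complex set" where
  "kscalars cplx = (if cplx then UNIV else range complex_of_real)"

definition kline :: "bool \<Rightarrow> ('a::real_inner \<Rightarrow> 'a) \<Rightarrow> 'a \<Rightarrow> 'a set" where
  "kline cplx J e = {kscale cplx J c e | c. c \<in> kscalars cplx}"

definition kspan :: "bool \<Rightarrow> ('a::real_inner \<Rightarrow> 'a) \<Rightarrow> 'a set \<Rightarrow> 'a set" where
  "kspan cplx J S = {\<Sum>v\<in>T. kscale cplx J (c v) v | T c. finite T \<and> T \<subseteq> S \<and> (\<forall>v\<in>T. c v \<in> kscalars cplx)}"

text \<open>Orthogonality w.r.t. the K-inner product; in the complex case the complex inner
product is inner x y + i inner x (J y) (up to convention), so both parts must vanish.\<close>
definition korth :: "bool \<Rightarrow> ('a::real_inner \<Rightarrow> 'a) \<Rightarrow> 'a \<Rightarrow> 'a \<Rightarrow> bool" where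
  "korth cplx J x y \<longleftrightarrow> inner x y = 0 \<and> (cplx \<longrightarrow> inner x (J y) = 0)"

definition pos_part :: "('a \<Rightarrow> real) \<Rightarrow> 'a \<Rightarrow> real" where
  "pos_part F z = max (F z) 0"

definition neg_part :: "('a \<Rightarrow> real) \<Rightarrow> 'a \<Rightarrow> real" where
  "neg_part F z = max (- F z) 0"

end

theory Submission
  imports Defs
begin

lemma norm_le_orth:
  fixes x y :: "'a::real_inner"
  assumes "inner x y = 0"
  shows "norm x \<le> norm (x + y)"
proof -
  have "(norm (x+y))^2 = (norm x)^2 + (norm y)^2"
    using assms by (simp add: power2_norm_eq_inner inner_add inner_commute)
  then have "(norm x)^2 \<le> (norm (x+y))^2" by simp
  then show ?thesis by (simp add: power2_le_iff_abs_le)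
qed

lemma kscale_orth:
  assumes J: "cplx \<longrightarrow> complex_structure J"
    and o: "korth cplx J u s"
  shows "inner (kscale cplx J a s) (kscale cplx J b u) = 0"
proof (cases cplx)
  case False
  then show ?thesis using o by (simp add: kscale_def korth_def inner_commute)
next
  case True
  then have cs: "complex_structure J" using J by simp
  then have lin: "linear J" and JJ: "\<And>x. J (J x) = - x" and JI: "\<And>x y. inner (J x) (J y) = inner x y"
    by (auto simp: complex_structure_def)
  have 1: "inner s u = 0" "inner u (J s) = 0" using o True by (auto simp: korth_def inner_commute)
  have 2: "inner (J s) (J u) = 0" using JI 1 by simp
  have 3: "inner (J s) u = 0" using 1 by (simp add: inner_commute)
  have "inner s (J u) = inner (J s) (J (J u))" using JI by simp
  also have "\<dots> = 0" using JJ 3 by simp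
  finally have 4: "inner s (J u) = 0" .
  show ?thesis using True 1 2 3 4 by (simp add: kscale_def inner_add inner_add_left inner_add_right)
qed

theorem corollary5:
  fixes cplx :: bool and J :: "'a::{real_inner, complete_space} \<Rightarrow> 'a"
    and e estar :: "nat \<Rightarrow> 'a" and F :: "'a \<Rightarrow> real" and M1 M2 :: real and Z :: "'a set"
  assumes J: "cplx \<longrightarrow> complex_structure J"
    and norm_e: "\<forall>j. norm (e j) = 1" and norm_estar: "\<forall>i. norm (estar i) = 1"
    and orth_ee: "\<forall>i j. i \<noteq> j \<longrightarrow> korth cplx J (e i) (e j)"
    and orth_ss: "\<forall>i j. i \<noteq> j \<longrightarrow> korth cplx J (estar i) (estar j)"
    and orth_es: "\<forall>i j. korth cplx J (e i) (estar j)"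
    and basis: "closure (kspan cplx J (range e \<union> range estar)) = UNIV"
    and Z_def: "Z = closure (kspan cplx J (range e))"
    and contF: "continuous_on Z F" and F0: "F 0 = 0"
    and M1: "M1 > 0" and M2: "M2 > 0"
    and hplus: "\<forall>z1 z2. z1 \<in> (\<Union>j. kline cplx J (e j)) \<and> z2 \<in> (\<Union>j. kline cplx J (e j))
                  \<and> korth cplx J z1 z2 \<longrightarrow> pos_part F z1 + pos_part F z2 \<le> M1 * norm (z1 + z2)"
    and hminus: "\<forall>z1 z2. z1 \<in> (\<Union>j. kline cplx J (e j)) \<and> z2 \<in> (\<Union>j. kline cplx J (e j))
                  \<and> korth cplx J z1 z2 \<longrightarrow> neg_part F z1 + neg_part F z2 \<le> M2 * norm (z1 + z2)"
  shows "\<exists>Fh :: 'a \<Rightarrow> real. continuous_on UNIV Fh \<and> (\<forall>z\<in>Z. Fh z = F z) \<and>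
           (\<forall>x1 x2. x1 \<in> (\<Union>j. kline cplx J (e j)) \<union> (\<Union>i. kline cplx J (estar i))
                 \<and> x2 \<in> (\<Union>j. kline cplx J (e j)) \<union> (\<Union>i. kline cplx J (estar i))
                 \<and> korth cplx J x1 x2 \<longrightarrow> \<bar>Fh x1 + Fh x2\<bar> \<le> (M1 + M2) * norm (x1 + x2))"
proof -
  let ?L = "\<Union>j. kline cplx J (e j)"
  let ?Ls = "\<Union>i. kline cplx J (estar i)"
  define W where "W = {x. \<forall>z\<in>Z. inner x z = 0}"
  have sc0: "0 \<in> kscalars cplx" by (auto simp: kscalars_def)
  have LZ: "?L \<subseteq> Z"
  proof
    fix x assume "x \<in> ?L"
    then obtain j c where c: "c \<in> kscalars cplx" "x = kscale cplx J c (e j)" by (auto simp: kline_def)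
    have "x \<in> kspan cplx J (range e)"
      unfolding kspan_def
      by (rule CollectI, rule exI[of _ "{e j}"], rule exI[of _ "\<lambda>_. c"]) (use c in auto)
    then show "x \<in> Z" unfolding Z_def using closure_subset by blast
  qed
  have LsW: "?Ls \<subseteq> W"
  proof
    fix x assume "x \<in> ?Ls"
    then obtain i a where a: "x = kscale cplx J a (estar i)" by (auto simp: kline_def)
    have "kspan cplx J (range e) \<subseteq> {z. inner x z = 0}"
    proof
      fix z assume "z \<in> kspan cplx J (range e)"
      then obtain T c where z: "z = (\<Sum>v\<in>T. kscale cplx J (c v) v)" "T \<subseteq> range e"
        by (auto simp: kspan_def)
      have "inner x z = (\<Sum>v\<in>T. inner x (kscale cplx J (c v) v))" by (simp add: z inner_sum_right)
      also have "\<dots> = 0"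
      proof (rule sum.neutral, rule ballI)
        fix v assume "v \<in> T"
        then obtain j where "v = e j" using z by auto
        then show "inner x (kscale cplx J (c v) v) = 0"
          using kscale_orth[OF J orth_es[rule_format, of j i]] a by simp
      qed
      finally show "z \<in> {z. inner x z = 0}" by simp
    qed
    moreover have "closed {z. inner x z = 0}"
      by (rule closed_Collect_eq) (auto intro: continuous_intros)
    ultimately have "Z \<subseteq> {z. inner x z = 0}" unfolding Z_def by (rule closure_minimal)
    then show "x \<in> W" unfolding W_def by auto
  qed
  have clZ: "closed Z" unfolding Z_def by simp
  have clW: "closed W"
  proof -
    have "W = (\<Inter>z\<in>Z. {x. inner x z = 0})" unfolding W_def by auto
    moreover have "closed {x. inner x z = 0}" for z
      by (rule closed_Collect_eq) (auto intro: continuous_intros)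
    ultimately show ?thesis by auto
  qed
  have ZW: "x \<in> Z \<Longrightarrow> x \<in> W \<Longrightarrow> x = 0" for x unfolding W_def by auto
  define G where "G x = (if x \<in> Z then F x else 0)" for x
  have cG: "continuous_on (Z \<union> W) G"
  proof (rule continuous_on_closed_Un[OF clZ clW])
    show "continuous_on Z G" using contF by (rule continuous_on_cong[THEN iffD1, rotated 2]) (auto simp: G_def)
    show "continuous_on W G"
      by (rule continuous_on_cong[THEN iffD1, OF refl _ continuous_on_const[of W 0]])
         (auto simp: G_def F0 dest: ZW)
  qed
  have "closedin euclidean (Z \<union> W)" using clZ clW by auto
  moreover have "normal_space (euclidean :: 'a topology)"
    by (simp add: metrizable_imp_normal_space metrizable_space_euclidean)
  moreover have "continuous_map (subtopology euclidean (Z \<union> W)) euclideanreal G"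
    using cG by (simp add: continuous_map_iff_continuous)
  ultimately obtain g where g: "continuous_map euclidean euclideanreal g" "\<And>x. x \<in> Z \<union> W \<Longrightarrow> g x = G x"
    using Tietze_extension_realinterval[of euclidean "Z \<union> W" UNIV G] by auto
  have gc: "continuous_on UNIV g" using g(1) by (simp add: continuous_map_iff_continuous)
  have gZ: "\<forall>z\<in>Z. g z = F z" using g(2) by (auto simp: G_def)
  have gL: "x \<in> ?L \<Longrightarrow> g x = F x" for x using gZ LZ by auto
  have gLs: "g x = 0" if "x \<in> ?Ls" for x
  proof -
    have "x \<in> W" using LsW that by blast
    then show ?thesis using g(2)[of x] ZW[of x] F0 by (auto simp: G_def)
  qed
  have J0: "cplx \<longrightarrow> J 0 = 0"
    using J by (auto simp: complex_structure_def linear_0)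
  have zeroL: "0 \<in> kline cplx J (e 0)"
    unfolding kline_def using sc0 by (auto simp: kscale_def intro!: exI[of _ 0])
  have single: "\<bar>F x\<bar> \<le> (M1 + M2) * norm x" if "x \<in> ?L" for x
  proof -
    have k: "korth cplx J x 0" using J0 by (auto simp: korth_def)
    have "pos_part F x + pos_part F 0 \<le> M1 * norm (x + 0)"
      using hplus that zeroL k by blast
    moreover have "neg_part F x + neg_part F 0 \<le> M2 * norm (x + 0)"
      using hminus that zeroL k by blast
    ultimately show ?thesis by (auto simp: pos_part_def neg_part_def F0 algebra_simps)
  qed
  have main: "\<bar>g x1 + g x2\<bar> \<le> (M1 + M2) * norm (x1 + x2)"
    if x1: "x1 \<in> ?L \<union> ?Ls" and x2: "x2 \<in> ?L \<union> ?Ls" and k: "korth cplx J x1 x2" for x1 x2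
  proof -
    have i12: "inner x1 x2 = 0" "inner x2 x1 = 0" using k by (auto simp: korth_def inner_commute)
    have nn: "0 \<le> (M1 + M2) * norm (x1 + x2)" using M1 M2 by simp
    show ?thesis
    proof (cases "x1 \<in> ?L")
      case a1: True
      show ?thesis
      proof (cases "x2 \<in> ?L")
        case True
        have "pos_part F x1 + pos_part F x2 \<le> M1 * norm (x1 + x2)"
          using hplus a1 True k by blast
        moreover have "neg_part F x1 + neg_part F x2 \<le> M2 * norm (x1 + x2)"
          using hminus a1 True k by blast
        ultimately show ?thesis using gL[OF a1] gL[OF True]
          by (auto simp: pos_part_def neg_part_def algebra_simps)
      next
        case False
        then have "g x2 = 0" using gLs x2 by auto
        moreover have "(M1 + M2) * norm x1 \<le> (M1 + M2) * norm (x1 + x2)"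
          using norm_le_orth[OF i12(1)] M1 M2 by (intro mult_left_mono) auto
        ultimately show ?thesis using single[OF a1] gL[OF a1] by simp
      qed
    next
      case a1: False
      then have g1: "g x1 = 0" using gLs x1 by auto
      show ?thesis
      proof (cases "x2 \<in> ?L")
        case True
        have "(M1 + M2) * norm x2 \<le> (M1 + M2) * norm (x2 + x1)"
          using norm_le_orth[OF i12(2)] M1 M2 by (intro mult_left_mono) auto
        then show ?thesis using single[OF True] gL[OF True] g1 by (simp add: add.commute)
      next
        case False
        then show ?thesis using gLs x2 g1 nn by auto
      qed
    qed
  qed
  show ?thesis using gc gZ main by blast
qed

end
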